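(* Blocker has a strategy ensuring $g_{\mathrm{ECB}}(n,K_3)\le (1+o(1))\frac{2n}{3}$ as $n\to\infty$.
   Context: Embedded Constructor-Blocker game: the vertices of $K_n$ are placed at the $n$-th roots of unity in the complex plane, and each edge is drawn as the straight chord inside the unit disk between its endpoints. Constructor and Blocker alternately claim previously unclaimed edges, Constructor moving first. Constructor may only claim an edge whose chord does not cross (in an interior point) any chord she has already claimed; Blocker may claim any unclaimed edge. The game ends when Constructor cannot claim any more edges or all edges are claimed. The score is the number of triangles in Constructor's graph at the end; Constructor maximizes it, Blocker minimizes it. $g_{\mathrm{ECB}}(n,K_3)$ denotes the score under optimal play. *)

theory Defs
  imports "HOL-Analysis.Analysis"
begin

text \<open>Vertex i of K_n (i < n) sits at the n-th root of unity exp(2 pi i k/n).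
  An edge is an ordered pair (i,j) with i < j < n, standing for the chord
  between root i and root j.\<close>

definition vpos :: "nat \<Rightarrow> nat \<Rightarrow> complex" where
  "vpos n i = cis (2 * pi * real i / real n)"

definition ecb_edges :: "nat \<Rightarrow> (nat \<times> nat) set" where
  "ecb_edges n = {(i, j). i < j \<and> j < n}"

definition chords_cross :: "nat \<Rightarrow> nat \<times> nat \<Rightarrow> nat \<times> nat \<Rightarrow> bool" where
  "chords_cross n e f \<longleftrightarrow>
     open_segment (vpos n (fst e)) (vpos n (snd e)) \<inter>
     open_segment (vpos n (fst f)) (vpos n (snd f)) \<noteq> {}"

definition constr_moves :: "nat \<Rightarrow> (nat \<times> nat) set \<Rightarrow> (nat \<times> nat) set \<Rightarrow> (nat \<times> nat) set" where
  "constr_moves n C B = {e \<in> ecb_edges n. e \<notin> C \<and> e \<notin> B \<and> (\<forall>f\<in>C. \<not> chords_cross n e f)}"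

definition blocker_moves :: "nat \<Rightarrow> (nat \<times> nat) set \<Rightarrow> (nat \<times> nat) set \<Rightarrow> (nat \<times> nat) set" where
  "blocker_moves n C B = {e \<in> ecb_edges n. e \<notin> C \<and> e \<notin> B}"

definition num_triangles :: "nat \<Rightarrow> (nat \<times> nat) set \<Rightarrow> nat" where
  "num_triangles n C = card {(a, b, c). a < b \<and> b < c \<and> c < n \<and>
       (a, b) \<in> C \<and> (b, c) \<in> C \<and> (a, c) \<in> C}"

text \<open>Minimax value of the game with remaining fuel k (an upper bound on the number
  of remaining moves), with Constructor to move iff the flag is True.\<close>
primrec ecb_val :: "nat \<Rightarrow> nat \<Rightarrow> bool \<Rightarrow> (nat \<times> nat) set \<Rightarrow> (nat \<times> nat) set \<Rightarrow> nat" where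
  "ecb_val n 0 t C B = num_triangles n C"
| "ecb_val n (Suc k) t C B =
     (if t then
        (if constr_moves n C B = {} then num_triangles n C
         else Max ((\<lambda>e. ecb_val n k False (insert e C) B) ` constr_moves n C B))
      else
        (if blocker_moves n C B = {} then num_triangles n C
         else Min ((\<lambda>e. ecb_val n k True C (insert e B)) ` blocker_moves n C B)))"

text \<open>g_ECB(n, K_3): value under optimal play from the empty board, Constructor first.
  The fuel card (ecb_edges n) suffices since every move claims a new edge.\<close>
definition g_ECB_K3 :: "nat \<Rightarrow> nat" where
  "g_ECB_K3 n = ecb_val n (card (ecb_edges n)) True {} {}"

end

theory Submission
  imports Defs
begin


lemma seg_cross:
  fixes A B C D :: complex
  assumes h1: "Re (C-A) * Im (B-A) - Im (C-A) * Re (B-A) < 0"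
      and h2: "Re (C-A) * Im (D-A) - Im (C-A) * Re (D-A) > 0"
      and h3: "Re (D-B) * Im (A-B) - Im (D-B) * Re (A-B) > 0"
      and h4: "Re (D-B) * Im (C-B) - Im (D-B) * Re (C-B) < 0"
  shows "open_segment A C \<inter> open_segment B D \<noteq> {}"
proof -
  define u1 where "u1 = Re C - Re A"
  define u2 where "u2 = Im C - Im A"
  define v1 where "v1 = Re D - Re B"
  define v2 where "v2 = Im D - Im B"
  define w1 where "w1 = Re B - Re A"
  define w2 where "w2 = Im B - Im A"
  define den where "den = u1 * v2 - u2 * v1"
  have f1: "u1 * w2 - u2 * w1 < 0" using h1 by (simp add: u1_def u2_def w1_def w2_def)
  have f2: "u1 * (w2 + v2) - u2 * (w1 + v1) > 0" using h2 by (simp add: u1_def u2_def w1_def w2_def v1_def v2_def algebra_simps)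
  have f3: "v1 * (- w2) - v2 * (- w1) > 0" using h3 by (simp add: v1_def v2_def w1_def w2_def algebra_simps)
  have f4: "v1 * (u2 - w2) - v2 * (u1 - w1) < 0" using h4 by (simp add: u1_def u2_def w1_def w2_def v1_def v2_def algebra_simps)
  have dpos: "den > 0" using f1 f2 by (simp add: den_def algebra_simps)
  define s where "s = (w1 * v2 - w2 * v1) / den"
  define t where "t = (w1 * u2 - w2 * u1) / den"
  have s0: "0 < s" using f3 dpos by (simp add: s_def algebra_simps)
  have s1: "s < 1" using f4 dpos by (simp add: s_def den_def algebra_simps)
  have t0: "0 < t" using f1 dpos by (simp add: t_def algebra_simps)
  have t1: "t < 1" using f2 dpos by (simp add: t_def den_def algebra_simps)
  have AC: "A \<noteq> C" using h1 by auto
  have BD: "B \<noteq> D" using h3 by auto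
  define P where "P = (1 - s) *\<^sub>R A + s *\<^sub>R C"
  have dne: "den \<noteq> 0" using dpos by simp
  have eq1: "s * u1 - t * v1 = w1"
  proof -
    have "s * u1 - t * v1 = ((w1 * v2 - w2 * v1) * u1 - (w1 * u2 - w2 * u1) * v1) / den"
      unfolding s_def t_def using dne by (simp add: field_simps)
    also have "(w1 * v2 - w2 * v1) * u1 - (w1 * u2 - w2 * u1) * v1 = w1 * den"
      by (simp add: den_def algebra_simps)
    finally show ?thesis using dne by simp
  qed
  have eq2: "s * u2 - t * v2 = w2"
  proof -
    have "s * u2 - t * v2 = ((w1 * v2 - w2 * v1) * u2 - (w1 * u2 - w2 * u1) * v2) / den"
      unfolding s_def t_def using dne by (simp add: field_simps)
    also have "(w1 * v2 - w2 * v1) * u2 - (w1 * u2 - w2 * u1) * v2 = w2 * den"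
      by (simp add: den_def algebra_simps)
    finally show ?thesis using dne by simp
  qed
  have "P = (1 - t) *\<^sub>R B + t *\<^sub>R D"
    using eq1 eq2 by (simp add: P_def complex_eq_iff u1_def u2_def v1_def v2_def w1_def w2_def algebra_simps)
  hence "P \<in> open_segment A C" "P \<in> open_segment B D"
    using s0 s1 t0 t1 AC BD P_def by (auto simp: in_segment)
  thus ?thesis by blast
qed



definition ori :: "complex \<Rightarrow> complex \<Rightarrow> complex \<Rightarrow> real" where
  "ori X Y Z = Re (Y - X) * Im (Z - X) - Im (Y - X) * Re (Z - X)"

lemma sin3_pos:
  fixes u v :: real
  assumes "0 < u" "0 < v" "u + v < 2 * pi"
  shows "sin u + sin v - sin (u + v) > 0"
proof -
  define p where "p = u / 2"
  define q where "q = v / 2"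
  have u: "u = 2 * p" and v: "v = 2 * q" by (simp_all add: p_def q_def)
  have sp: "sin p > 0" using assms by (intro sin_gt_zero) (auto simp: p_def)
  have sq: "sin q > 0" using assms by (intro sin_gt_zero) (auto simp: q_def)
  have spq: "sin (p + q) > 0" using assms by (intro sin_gt_zero) (auto simp: p_def q_def)
  have id: "sin u + sin v - sin (u + v) = 4 * sin p * sin q * sin (p + q)"
  proof -
    have e: "u + v = 2 * (p + q)" by (simp add: u v)
    have "sin u + sin v - sin (u + v) = 2 * sin p * cos p + 2 * sin q * cos q
           - 2 * sin (p + q) * cos (p + q)"
      unfolding e by (simp only: sin_double u v)
    also have "\<dots> = 4 * sin p * sin q * sin (p + q)"
    proof -
      have a: "(sin p)^2 + (cos p)^2 = 1" and b: "(sin q)^2 + (cos q)^2 = 1" by simp_all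
      show ?thesis unfolding sin_add cos_add using a b by algebra
    qed
    finally show ?thesis .
  qed
  show ?thesis unfolding id using sp sq spq by simp
qed

lemma ori_cis:
  "ori (cis x) (cis y) (cis z) = sin (y - x) + sin (z - y) - sin (z - x)"
  by (simp add: ori_def sin_diff algebra_simps)

lemma ori_cis_pos:
  assumes "x < y" "y < z" "z < x + 2 * pi"
  shows "ori (cis x) (cis y) (cis z) > 0"
proof -
  have "sin (y - x) + sin (z - y) - sin ((y - x) + (z - y)) > 0"
    using assms by (intro sin3_pos) auto
  thus ?thesis by (simp add: ori_cis)
qed



lemma ori_swap: "ori X Z Y = - ori X Y Z" by (simp add: ori_def algebra_simps)
lemma ori_cyc: "ori Y Z X = ori X Y Z" by (simp add: ori_def algebra_simps)

lemma interleave_cross: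
  assumes "a < b" "b < c" "c < d" "d < n"
  shows "chords_cross n (a, c) (b, d)"
proof -
  define \<alpha> where "\<alpha> k = 2 * pi * real k / real n" for k
  have np: "real n > 0" using assms by simp
  have mono: "\<alpha> i < \<alpha> j" if "i < j" for i j
    using that np unfolding \<alpha>_def by (simp add: divide_strict_right_mono)
  have a0: "0 \<le> \<alpha> a" unfolding \<alpha>_def using np by simp
  have d2: "\<alpha> d < 2 * pi" unfolding \<alpha>_def using np assms by (simp add: field_simps)
  have vp: "vpos n k = cis (\<alpha> k)" for k by (simp add: vpos_def \<alpha>_def)
  define A where "A = cis (\<alpha> a)"
  define B where "B = cis (\<alpha> b)"
  define C where "C = cis (\<alpha> c)"
  define D where "D = cis (\<alpha> d)"
  have abc: "\<alpha> a < \<alpha> b" "\<alpha> b < \<alpha> c" "\<alpha> c < \<alpha> d" using mono assms by auto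
  have o1: "ori A B C > 0" unfolding A_def B_def C_def
    using abc a0 d2 by (intro ori_cis_pos) auto
  have o2: "ori A C D > 0" unfolding A_def D_def C_def
    using abc a0 d2 by (intro ori_cis_pos) auto
  have o3: "ori A B D > 0" unfolding A_def B_def D_def
    using abc a0 d2 by (intro ori_cis_pos) auto
  have o4: "ori B C D > 0" unfolding B_def C_def D_def
    using abc a0 d2 by (intro ori_cis_pos) auto
  have "open_segment A C \<inter> open_segment B D \<noteq> {}"
  proof (rule seg_cross)
    show "Re (C-A) * Im (B-A) - Im (C-A) * Re (B-A) < 0"
    proof -
      have "Re (C-A) * Im (B-A) - Im (C-A) * Re (B-A) = - ori A B C" by (simp add: ori_def algebra_simps)
      thus ?thesis using o1 by linarith
    qed
    show "Re (C-A) * Im (D-A) - Im (C-A) * Re (D-A) > 0"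
    proof -
      have "Re (C-A) * Im (D-A) - Im (C-A) * Re (D-A) = ori A C D" by (simp add: ori_def algebra_simps)
      thus ?thesis using o2 by linarith
    qed
    show "Re (D-B) * Im (A-B) - Im (D-B) * Re (A-B) > 0"
    proof -
      have "Re (D-B) * Im (A-B) - Im (D-B) * Re (A-B) = ori A B D" by (simp add: ori_def algebra_simps)
      thus ?thesis using o3 by linarith
    qed
    show "Re (D-B) * Im (C-B) - Im (D-B) * Re (C-B) < 0"
    proof -
      have "Re (D-B) * Im (C-B) - Im (D-B) * Re (C-B) = - ori B C D" by (simp add: ori_def algebra_simps)
      thus ?thesis using o4 by linarith
    qed
  qed
  thus ?thesis by (simp add: chords_cross_def vp A_def B_def C_def D_def)
qed



definition NCc :: "(nat \<times> nat) set \<Rightarrow> bool" where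
  "NCc C \<longleftrightarrow> (\<forall>a b c d. (a, c) \<in> C \<longrightarrow> (b, d) \<in> C \<longrightarrow> a < b \<longrightarrow> b < c \<longrightarrow> c < d \<longrightarrow> False)"

definition Tri :: "nat \<Rightarrow> (nat \<times> nat) set \<Rightarrow> (nat \<times> nat \<times> nat) set" where
  "Tri n C = {(a, b, c). a < b \<and> b < c \<and> c < n \<and>
       (a, b) \<in> C \<and> (b, c) \<in> C \<and> (a, c) \<in> C}"

definition Mid :: "nat \<Rightarrow> (nat \<times> nat) set \<Rightarrow> nat set" where
  "Mid n C = (\<lambda>(a, b, c). b) ` Tri n C"

lemma Tri_finite: "finite (Tri n C)"
proof -
  have "Tri n C \<subseteq> {..<n} \<times> {..<n} \<times> {..<n}" by (auto simp: Tri_def)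
  thus ?thesis by (rule finite_subset) auto
qed

lemma Tri_inj:
  assumes "NCc C"
  shows "inj_on (\<lambda>(a, b, c). b) (Tri n C)"
proof (rule inj_onI, clarsimp)
  fix a b c a' c'
  assume t1: "(a, b, c) \<in> Tri n C" and t2: "(a', b, c') \<in> Tri n C"
  have h1: "a < b" "b < c" "(a, b) \<in> C" "(b, c) \<in> C" "(a, c) \<in> C" using t1 by (auto simp: Tri_def)
  have h2: "a' < b" "b < c'" "(a', b) \<in> C" "(b, c') \<in> C" "(a', c') \<in> C" using t2 by (auto simp: Tri_def)
  have "a = a'"
  proof (rule ccontr)
    assume "a \<noteq> a'"
    then consider "a < a'" | "a' < a" by linarith
    thus False
    proof cases
      case 1 thus False using assms h1 h2 unfolding NCc_def by blast
    next
      case 2 thus False using assms h1 h2 unfolding NCc_def by blast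
    qed
  qed
  moreover have "c = c'"
  proof (rule ccontr)
    assume "c \<noteq> c'"
    then consider "c < c'" | "c' < c" by linarith
    thus False
    proof cases
      case 1 thus False using assms h1 h2 \<open>a = a'\<close> unfolding NCc_def by blast
    next
      case 2 thus False using assms h1 h2 \<open>a = a'\<close> unfolding NCc_def by blast
    qed
  qed
  ultimately show "a = a' \<and> c = c'" by simp
qed

lemma Mid_adj:
  assumes "NCc C" "(i, Suc i) \<notin> C" "i \<in> Mid n C" "Suc i \<in> Mid n C"
  shows False
proof -
  obtain a c where t1: "(a, i, c) \<in> Tri n C" using assms(3) by (auto simp: Mid_def)
  obtain a' c' where t2: "(a', Suc i, c') \<in> Tri n C" using assms(4) by (auto simp: Mid_def)
  have h1: "a < i" "i < c" "(i, c) \<in> C" using t1 by (auto simp: Tri_def)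
  have h2: "a' < Suc i" "Suc i < c'" "(a', Suc i) \<in> C" using t2 by (auto simp: Tri_def)
  have "c \<noteq> Suc i" using h1 assms(2) by auto
  hence c: "Suc i < c" using h1 by simp
  have "a' \<noteq> i" using h2 assms(2) by auto
  hence a: "a' < i" using h2 by simp
  show False using assms(1) h1 h2 a c unfolding NCc_def by blast
qed

lemma Mid_sub: "Mid n C \<subseteq> {..<n}"
  by (auto simp: Mid_def Tri_def)

lemma Mid_block:
  assumes "NCc C" "(3*m, 3*m+1) \<notin> C \<or> (3*m+1, 3*m+2) \<notin> C"
  shows "card (Mid n C \<inter> {3*m, 3*m+1, 3*m+2}) \<le> 2"
proof -
  from assms(2) consider "(3*m, 3*m+1) \<notin> C" | "(3*m+1, 3*m+2) \<notin> C" by blast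
  thus ?thesis
  proof cases
    case 1
    hence "\<not> (3*m \<in> Mid n C \<and> 3*m+1 \<in> Mid n C)" using Mid_adj[OF assms(1), of "3*m"] by auto
    hence "Mid n C \<inter> {3*m, 3*m+1, 3*m+2} \<subseteq> {3*m+1, 3*m+2} \<or>
           Mid n C \<inter> {3*m, 3*m+1, 3*m+2} \<subseteq> {3*m, 3*m+2}" by blast
    thus ?thesis
    proof
      assume "Mid n C \<inter> {3*m, 3*m+1, 3*m+2} \<subseteq> {3*m+1, 3*m+2}"
      hence "card (Mid n C \<inter> {3*m, 3*m+1, 3*m+2}) \<le> card {3*m+1, 3*m+2}"
        by (intro card_mono) auto
      thus ?thesis by simp
    next
      assume "Mid n C \<inter> {3*m, 3*m+1, 3*m+2} \<subseteq> {3*m, 3*m+2}"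
      hence "card (Mid n C \<inter> {3*m, 3*m+1, 3*m+2}) \<le> card {3*m, 3*m+2}"
        by (intro card_mono) auto
      thus ?thesis by simp
    qed
  next
    case 2
    hence "\<not> (3*m+1 \<in> Mid n C \<and> 3*m+2 \<in> Mid n C)" using Mid_adj[OF assms(1), of "3*m+1"] by auto
    hence "Mid n C \<inter> {3*m, 3*m+1, 3*m+2} \<subseteq> {3*m, 3*m+1} \<or>
           Mid n C \<inter> {3*m, 3*m+1, 3*m+2} \<subseteq> {3*m, 3*m+2}" by blast
    thus ?thesis
    proof
      assume "Mid n C \<inter> {3*m, 3*m+1, 3*m+2} \<subseteq> {3*m, 3*m+1}"
      hence "card (Mid n C \<inter> {3*m, 3*m+1, 3*m+2}) \<le> card {3*m, 3*m+1}"
        by (intro card_mono) auto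
      thus ?thesis by simp
    next
      assume "Mid n C \<inter> {3*m, 3*m+1, 3*m+2} \<subseteq> {3*m, 3*m+2}"
      hence "card (Mid n C \<inter> {3*m, 3*m+1, 3*m+2}) \<le> card {3*m, 3*m+2}"
        by (intro card_mono) auto
      thus ?thesis by simp
    qed
  qed
qed

lemma Mid_prefix:
  assumes "NCc C" "\<And>k. 3*k+2 < n \<Longrightarrow> (3*k, 3*k+1) \<notin> C \<or> (3*k+1, 3*k+2) \<notin> C"
  shows "3*m \<le> n \<Longrightarrow> card (Mid n C \<inter> {..<3*m}) \<le> 2*m"
proof (induction m)
  case 0 thus ?case by simp
next
  case (Suc m)
  have eq: "Mid n C \<inter> {..<3*Suc m} = (Mid n C \<inter> {..<3*m}) \<union> (Mid n C \<inter> {3*m, 3*m+1, 3*m+2})"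
    by auto
  have "card (Mid n C \<inter> {..<3*Suc m}) \<le> card (Mid n C \<inter> {..<3*m}) + card (Mid n C \<inter> {3*m, 3*m+1, 3*m+2})"
    unfolding eq by (rule card_Un_le)
  also have "\<dots> \<le> 2*m + 2"
  proof -
    have "3*m+2 < n" using Suc.prems by simp
    hence "card (Mid n C \<inter> {3*m, 3*m+1, 3*m+2}) \<le> 2"
      using Mid_block[OF assms(1), of m n] assms(2)[of m] by blast
    moreover have "card (Mid n C \<inter> {..<3*m}) \<le> 2*m" using Suc by simp
    ultimately show ?thesis by simp
  qed
  finally show ?case by simp
qed

lemma tri_bound:
  assumes "NCc C" "\<And>k. 3*k+2 < n \<Longrightarrow> (3*k, 3*k+1) \<notin> C \<or> (3*k+1, 3*k+2) \<notin> C"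
  shows "num_triangles n C \<le> 2 * (n div 3) + 2"
proof -
  have "num_triangles n C = card (Tri n C)" by (simp add: num_triangles_def Tri_def)
  also have "\<dots> = card (Mid n C)" unfolding Mid_def
    using Tri_inj[OF assms(1)] by (simp add: card_image)
  also have "\<dots> \<le> 2 * (n div 3) + 2"
  proof -
    let ?m = "n div 3"
    have "Mid n C \<subseteq> (Mid n C \<inter> {..<3*?m}) \<union> {3*?m..<n}" using Mid_sub[of n C] by auto
    hence "card (Mid n C) \<le> card ((Mid n C \<inter> {..<3*?m}) \<union> {3*?m..<n})"
      by (intro card_mono) auto
    also have "\<dots> \<le> card (Mid n C \<inter> {..<3*?m}) + card {3*?m..<n}" by (rule card_Un_le)
    also have "\<dots> \<le> 2 * ?m + 2"
    proof -
      have "card (Mid n C \<inter> {..<3*?m}) \<le> 2 * ?m"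
        using Mid_prefix[OF assms] by simp
      moreover have "card {3*?m..<n} \<le> 2" by simp
      ultimately show ?thesis by simp
    qed
    finally show ?thesis .
  qed
  finally show ?thesis .
qed



definition pp :: "nat \<Rightarrow> nat \<times> nat \<Rightarrow> nat \<times> nat \<Rightarrow> bool" where
  "pp n e f \<longleftrightarrow> (\<exists>k. 3*k+2 < n \<and>
     ((e = (3*k, 3*k+1) \<and> f = (3*k+1, 3*k+2)) \<or> (e = (3*k+1, 3*k+2) \<and> f = (3*k, 3*k+1))))"

lemma pp_sym: "pp n e f \<Longrightarrow> pp n f e"
  unfolding pp_def by blast

lemma pp_unique: "pp n e f \<Longrightarrow> pp n e g \<Longrightarrow> f = g"
  unfolding pp_def by auto presburger+

lemma pp_irrefl: "\<not> pp n e e"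
  unfolding pp_def by auto

lemma pp_edge: "pp n e f \<Longrightarrow> f \<in> ecb_edges n"
  unfolding pp_def ecb_edges_def by auto

definition NC :: "nat \<Rightarrow> (nat \<times> nat) set \<Rightarrow> bool" where
  "NC n C \<longleftrightarrow> (\<forall>e\<in>C. \<forall>f\<in>C. e \<noteq> f \<longrightarrow> \<not> chords_cross n e f)"

lemma chords_cross_sym: "chords_cross n e f \<Longrightarrow> chords_cross n f e"
  unfolding chords_cross_def by blast

lemma NC_NCc:
  assumes "NC n C" "C \<subseteq> ecb_edges n"
  shows "NCc C"
  unfolding NCc_def
proof (intro allI impI)
  fix a b c d
  assume h: "(a, c) \<in> C" "(b, d) \<in> C" "a < b" "b < c" "c < d"
  have "d < n" using h(2) assms(2) by (auto simp: ecb_edges_def)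
  hence "chords_cross n (a, c) (b, d)" using h by (intro interleave_cross) auto
  moreover have "(a, c) \<noteq> (b, d)" using h by auto
  ultimately show False using assms(1) h unfolding NC_def by blast
qed

definition bnd :: "nat \<Rightarrow> nat" where "bnd n = 2 * (n div 3) + 2"

lemma good_bound:
  assumes "C \<subseteq> ecb_edges n" "NC n C" "\<forall>e\<in>C. \<forall>f\<in>C. \<not> pp n e f"
  shows "num_triangles n C \<le> bnd n"
  unfolding bnd_def
proof (rule tri_bound)
  show "NCc C" using NC_NCc assms by blast
  fix k assume "3*k+2 < n"
  hence "pp n (3*k, 3*k+1) (3*k+1, 3*k+2)" unfolding pp_def by blast
  thus "(3*k, 3*k+1) \<notin> C \<or> (3*k+1, 3*k+2) \<notin> C" using assms(3) by blast
qed

definition InvT :: "nat \<Rightarrow> (nat \<times> nat) set \<Rightarrow> (nat \<times> nat) set \<Rightarrow> bool" where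
  "InvT n C B \<longleftrightarrow> C \<subseteq> ecb_edges n \<and> C \<inter> B = {} \<and> NC n C \<and> (\<forall>e\<in>C. \<forall>f. pp n e f \<longrightarrow> f \<in> B)"

definition InvF :: "nat \<Rightarrow> (nat \<times> nat) set \<Rightarrow> (nat \<times> nat) set \<Rightarrow> bool" where
  "InvF n C B \<longleftrightarrow> C \<subseteq> ecb_edges n \<and> C \<inter> B = {} \<and> NC n C \<and> (\<forall>e\<in>C. \<forall>f\<in>C. \<not> pp n e f) \<and>
     (\<exists>e0. \<forall>e\<in>C. e \<noteq> e0 \<longrightarrow> (\<forall>f. pp n e f \<longrightarrow> f \<in> B))"

lemma InvT_good: "InvT n C B \<Longrightarrow> num_triangles n C \<le> bnd n"
  unfolding InvT_def by (intro good_bound) auto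

lemma InvF_good: "InvF n C B \<Longrightarrow> num_triangles n C \<le> bnd n"
  unfolding InvF_def by (intro good_bound) auto

lemma constr_step:
  assumes "InvT n C B" "e \<in> constr_moves n C B"
  shows "InvF n (insert e C) B"
proof -
  have I: "C \<subseteq> ecb_edges n" "C \<inter> B = {}" "NC n C" "\<forall>e\<in>C. \<forall>f. pp n e f \<longrightarrow> f \<in> B"
    using assms(1) by (auto simp: InvT_def)
  have e: "e \<in> ecb_edges n" "e \<notin> C" "e \<notin> B" "\<forall>f\<in>C. \<not> chords_cross n e f"
    using assms(2) by (auto simp: constr_moves_def)
  have "insert e C \<subseteq> ecb_edges n" using I e by auto
  moreover have "insert e C \<inter> B = {}" using I e by auto
  moreover have "NC n (insert e C)"
    using I(3) e(4) chords_cross_sym unfolding NC_def by blast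
  moreover have "\<forall>x\<in>insert e C. \<forall>y\<in>insert e C. \<not> pp n x y"
  proof (intro ballI notI)
    fix x y assume x: "x \<in> insert e C" and y: "y \<in> insert e C" and p: "pp n x y"
    show False
    proof (cases "x \<in> C")
      case True
      hence "y \<in> B" using I(4) p by blast
      thus False using y I(2) e(3) by auto
    next
      case False
      hence "x = e" using x by simp
      show False
      proof (cases "y = e")
        case True thus False using p pp_irrefl \<open>x = e\<close> by metis
      next
        case False
        hence "y \<in> C" using y by simp
        hence "e \<in> B" using I(4) pp_sym[OF p] \<open>x = e\<close> by blast
        thus False using e(3) by simp
      qed
    qed
  qed
  moreover have "\<forall>x\<in>insert e C. x \<noteq> e \<longrightarrow> (\<forall>f. pp n x f \<longrightarrow> f \<in> B)" using I(4) by auto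
  ultimately show ?thesis unfolding InvF_def by blast
qed

lemma blocker_step:
  assumes "InvF n C B" "blocker_moves n C B \<noteq> {}"
  shows "\<exists>f\<in>blocker_moves n C B. InvT n C (insert f B)"
proof -
  have I: "C \<subseteq> ecb_edges n" "C \<inter> B = {}" "NC n C" "\<forall>e\<in>C. \<forall>f\<in>C. \<not> pp n e f"
    using assms(1) by (auto simp: InvF_def)
  obtain e0 where e0: "\<forall>e\<in>C. e \<noteq> e0 \<longrightarrow> (\<forall>f. pp n e f \<longrightarrow> f \<in> B)"
    using assms(1) by (auto simp: InvF_def)
  show ?thesis
  proof (cases "\<exists>f. e0 \<in> C \<and> pp n e0 f \<and> f \<notin> B")
    case True
    then obtain f where f: "e0 \<in> C" "pp n e0 f" "f \<notin> B" by blast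
    have "f \<notin> C" using I(4) f by blast
    hence fm: "f \<in> blocker_moves n C B" using f pp_edge by (auto simp: blocker_moves_def)
    have "InvT n C (insert f B)"
      unfolding InvT_def
    proof (intro conjI)
      show "C \<inter> insert f B = {}" using I(2) \<open>f \<notin> C\<close> by auto
      show "\<forall>e\<in>C. \<forall>g. pp n e g \<longrightarrow> g \<in> insert f B"
      proof (intro ballI allI impI)
        fix e g assume "e \<in> C" "pp n e g"
        show "g \<in> insert f B"
        proof (cases "e = e0")
          case True thus ?thesis using pp_unique[of n e0 f g] f(2) \<open>pp n e g\<close> by simp
        next
          case False thus ?thesis using e0 \<open>e \<in> C\<close> \<open>pp n e g\<close> by blast
        qed
      qed
    qed (use I in auto)
    thus ?thesis using fm by blast
  next
    case False
    obtain g where g: "g \<in> blocker_moves n C B" using assms(2) by blast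
    have "g \<notin> C" using g by (auto simp: blocker_moves_def)
    have "InvT n C (insert g B)"
      unfolding InvT_def
    proof (intro conjI)
      show "C \<inter> insert g B = {}" using I(2) \<open>g \<notin> C\<close> by auto
      show "\<forall>e\<in>C. \<forall>h. pp n e h \<longrightarrow> h \<in> insert g B"
      proof (intro ballI allI impI)
        fix e h assume "e \<in> C" "pp n e h"
        show "h \<in> insert g B"
        proof (cases "e = e0")
          case True thus ?thesis using False \<open>e \<in> C\<close> \<open>pp n e h\<close> by blast
        next
          case ne: False thus ?thesis using e0 \<open>e \<in> C\<close> \<open>pp n e h\<close> by blast
        qed
      qed
    qed (use I in auto)
    thus ?thesis using g by blast
  qed
qed

lemma finite_edges: "finite (ecb_edges n)"
proof -
  have "ecb_edges n \<subseteq> {..<n} \<times> {..<n}" by (auto simp: ecb_edges_def)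
  thus ?thesis by (rule finite_subset) auto
qed

lemma val_bound:
  "(InvT n C B \<longrightarrow> ecb_val n k True C B \<le> bnd n) \<and> (InvF n C B \<longrightarrow> ecb_val n k False C B \<le> bnd n)"
proof (induction k arbitrary: C B)
  case 0
  show ?case using InvT_good InvF_good by simp
next
  case (Suc k)
  show ?case
  proof (intro conjI impI)
    assume T: "InvT n C B"
    show "ecb_val n (Suc k) True C B \<le> bnd n"
    proof (cases "constr_moves n C B = {}")
      case True thus ?thesis using InvT_good[OF T] by simp
    next
      case False
      have fin: "finite (constr_moves n C B)"
        by (rule finite_subset[OF _ finite_edges[of n]]) (auto simp: constr_moves_def)
      have "\<forall>e\<in>constr_moves n C B. ecb_val n k False (insert e C) B \<le> bnd n"
        using Suc.IH constr_step[OF T] by blast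
      thus ?thesis using False fin by (simp add: Max_le_iff)
    qed
  next
    assume F: "InvF n C B"
    show "ecb_val n (Suc k) False C B \<le> bnd n"
    proof (cases "blocker_moves n C B = {}")
      case True thus ?thesis using InvF_good[OF F] by simp
    next
      case False
      have fin: "finite (blocker_moves n C B)"
        by (rule finite_subset[OF _ finite_edges[of n]]) (auto simp: blocker_moves_def)
      obtain f where f: "f \<in> blocker_moves n C B" "InvT n C (insert f B)"
        using blocker_step[OF F False] by blast
      have "ecb_val n k True C (insert f B) \<le> bnd n" using Suc.IH f(2) by blast
      thus ?thesis using False fin f(1) by (simp add: Min_le_iff) blast
    qed
  qed
qed

lemma g_bound: "g_ECB_K3 n \<le> 2 * (n div 3) + 2"
proof -
  have "InvT n {} {}" by (simp add: InvT_def NC_def)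
  thus ?thesis using val_bound[of n "{}" "{}"] by (simp add: g_ECB_K3_def bnd_def)
qed



theorem proposition4p3:
  shows "\<forall>\<epsilon>>0. \<forall>\<^sub>F n in sequentially.
           real (g_ECB_K3 n) \<le> (1 + \<epsilon>) * (2 * real n / 3)"
proof (intro allI impI)
  fix \<epsilon> :: real assume ep: "\<epsilon> > 0"
  show "\<forall>\<^sub>F n in sequentially. real (g_ECB_K3 n) \<le> (1 + \<epsilon>) * (2 * real n / 3)"
    unfolding eventually_sequentially
  proof (intro exI allI impI)
    fix n assume nN: "nat \<lceil>3 / \<epsilon>\<rceil> \<le> n"
    have "3 / \<epsilon> \<le> real n" using nN by linarith
    hence "3 \<le> \<epsilon> * real n" using ep by (simp add: field_simps)
    have d: "3 * (n div 3) \<le> n" by simp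
    hence d': "3 * real (n div 3) \<le> real n" by linarith
    have "real (g_ECB_K3 n) \<le> real (2 * (n div 3) + 2)" using g_bound[of n] by linarith
    also have "\<dots> \<le> 2 * real n / 3 + 2" using d' by simp
    also have "\<dots> \<le> (1 + \<epsilon>) * (2 * real n / 3)"
      using \<open>3 \<le> \<epsilon> * real n\<close> by (simp add: algebra_simps)
    finally show "real (g_ECB_K3 n) \<le> (1 + \<epsilon>) * (2 * real n / 3)" .
  qed
qed

end
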